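(* Let $m\ge 3$ be an integer. Then $m=[z\,y_k\,x_k\,\dots\,y_2\,x_2\,y_1\,x_1]_{\boldsymbol b}$ for some integer $k\ge0$ and integers $x_i,y_i,z$ satisfying: $0\le x_i<q^{2i-1}-1$ for all $1\le i\le k$; $0\le y_i<2p$ for all $1\le i\le k$; $\{y_i-2,y_i-1,y_i\}\subset A+A+A$ for all $1\le i\le k$; and $3\le z\le 6pq^{2k+1}$.
   Context: Fix a prime $p$ and a set $A\subset\{1,\dots,\lfloor p/2\rfloor-1\}$ such that $A\cap(A+A+\{0,1\})=\emptyset$ and $A+A+A$ contains $p+2$ consecutive integers. Let $q>100p$ be a prime power. Let $\boldsymbol b=(b_1,b_2,\dots)$ with $b_i=q^i-1$ for $i$ odd and $b_i=p$ for $i$ even, and for arbitrary integers $x_1,\dots,x_n$ write $[x_n\,\dots\,x_1]_{\boldsymbol b}:=x_1+x_2b_1+x_3b_1b_2+\dots+x_nb_1\cdots b_{n-1}$ (so the $(2i-1)$-th digit has weight $b_1\cdots b_{2i-2}$ and the $2i$-th digit has weight $b_1\cdots b_{2i-1}$). *)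

theory Defs
  imports "HOL-Number_Theory.Number_Theory"
begin

definition sumset :: "int set \<Rightarrow> int set \<Rightarrow> int set" where
  "sumset X Y = {a + c | a c. a \<in> X \<and> c \<in> Y}"

definition bseq :: "nat \<Rightarrow> nat \<Rightarrow> nat \<Rightarrow> int" where
  "bseq p q i = (if odd i then int q ^ i - 1 else int p)"

text \<open>Mixed-radix value [x_n ... x_1]_b of the digit list [x_1, ..., x_n]
  (least significant digit first): the digit at list position j (0-based,
  i.e. the (j+1)-th digit) has weight b_1 * ... * b_j.\<close>
definition bval :: "(nat \<Rightarrow> int) \<Rightarrow> int list \<Rightarrow> int" where
  "bval b xs = (\<Sum>j<length xs. xs ! j * (\<Prod>t\<in>{1..j}. b t))"

end

theory Submission
  imports Defs
begin

lemma bval_cons: "bval b (a # xs) = a + b 1 * bval (\<lambda>t. b (Suc t)) xs"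
proof -
  have pr: "(\<Prod>t\<in>{1..Suc j}. b t) = b 1 * (\<Prod>t\<in>{1..j}. b (Suc t))" for j
  proof -
    have "{1..Suc j} = insert 1 {Suc 1..Suc j}" by auto
    hence "(\<Prod>t\<in>{1..Suc j}. b t) = b 1 * (\<Prod>t\<in>{Suc 1..Suc j}. b t)" by simp
    also have "(\<Prod>t\<in>{Suc 1..Suc j}. b t) = (\<Prod>t\<in>{1..j}. b (Suc t))"
      by (rule prod.shift_bounds_cl_Suc_ivl)
    finally show ?thesis .
  qed
  have "bval b (a # xs) = (\<Sum>j<Suc (length xs). (a # xs) ! j * (\<Prod>t\<in>{1..j}. b t))"
    by (simp add: bval_def)
  also have "\<dots> = a + (\<Sum>j<length xs. xs ! j * (\<Prod>t\<in>{1..Suc j}. b t))"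
    by (subst sum.lessThan_Suc_shift) simp
  also have "\<dots> = a + (\<Sum>j<length xs. xs ! j * (b 1 * (\<Prod>t\<in>{1..j}. b (Suc t))))"
    by (simp only: pr)
  also have "\<dots> = a + b 1 * bval (\<lambda>t. b (Suc t)) xs"
    by (simp add: bval_def sum_distrib_left mult_ac)
  finally show ?thesis .
qed

lemma bval_single: "bval b [z] = z"
  by (simp add: bval_def)

lemma main:
  fixes p q :: nat and S :: "int set"
  assumes Y: "\<And>r. \<exists>y. 0 \<le> y \<and> y < 2 * int p \<and> {y - 2, y - 1, y} \<subseteq> S \<and> y mod int p = r mod int p"
    and p2: "p \<ge> 2" and q2: "q \<ge> 2"
  shows "M \<ge> 3 \<Longrightarrow> \<exists>(k::nat) (x::nat \<Rightarrow> int) (y::nat \<Rightarrow> int) (z::int).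
           M = bval (\<lambda>t. bseq p q (t + 2*j)) (concat (map (\<lambda>i. [x i, y i]) [1..<k+1]) @ [z])
         \<and> (\<forall>i\<in>{1..k}. 0 \<le> x i \<and> x i < int q ^ (2*(i+j) - 1) - 1)
         \<and> (\<forall>i\<in>{1..k}. 0 \<le> y i \<and> y i < 2 * int p)
         \<and> (\<forall>i\<in>{1..k}. {y i - 2, y i - 1, y i} \<subseteq> S)
         \<and> 3 \<le> z \<and> z \<le> 6 * int p * int q ^ (2*(k+j) + 1)"
proof (induction "nat M" arbitrary: M j rule: less_induct)
  case (less M j)
  show ?case
  proof (cases "M \<le> 6 * int p * int q ^ (2*j + 1)")
    case True
    show ?thesis
      by (rule exI[of _ 0], rule exI[of _ "\<lambda>_. 0"], rule exI[of _ "\<lambda>_. 0"], rule exI[of _ M])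
         (use True less.prems in \<open>simp add: bval_single\<close>)
  next
    case False
    define Q where "Q = int q ^ (2*j+1)"
    define D where "D = Q - 1"
    have Q2: "Q \<ge> 2"
    proof -
      have h1: "1 \<le> int q ^ (2*j)" by (rule one_le_power) (use q2 in linarith)
      have h2: "int q * 1 \<le> int q * int q ^ (2*j)" by (rule mult_left_mono) (use h1 q2 in linarith)+
      have h: "int q \<le> Q" using h2 unfolding Q_def by (simp only: power_add power_one_right mult.commute mult_1_right)
      thus ?thesis using q2 by linarith
    qed
    hence D1: "D \<ge> 1" unfolding D_def by simp
    define x0 where "x0 = M mod D"
    define M' where "M' = M div D"
    have MD: "M = D * M' + x0" unfolding x0_def M'_def by simp
    have x0b: "0 \<le> x0" "x0 < D" unfolding x0_def using D1 by auto
    have Mbig: "M \<ge> 6 * int p * Q + 1" using False unfolding Q_def by simp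
    have "D * M' > D * (6 * int p - 1)"
    proof -
      have "D * M' = M - x0" using MD by simp
      also have "\<dots> \<ge> 6 * int p * (D + 1) + 1 - (D - 1)" using Mbig x0b unfolding D_def by simp
      finally show ?thesis using p2 by (simp add: algebra_simps)
    qed
    hence M'b: "M' \<ge> 6 * int p" using D1 by (simp add: mult_less_cancel_left)
    obtain y0 where y0: "0 \<le> y0" "y0 < 2 * int p" "{y0 - 2, y0 - 1, y0} \<subseteq> S"
      "y0 mod int p = M' mod int p" using Y by blast
    define M'' where "M'' = (M' - y0) div int p"
    have dvd: "int p dvd (M' - y0)" using mod_eq_dvd_iff[of M' "int p" y0] y0(4) by argo
    have M''e: "M' = y0 + int p * M''" unfolding M''_def using dvd by simp
    have "int p * M'' > int p * 4" using M''e M'b y0(2) by simp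
    hence M''4: "M'' > 4" using p2 by (simp add: mult_less_cancel_left)
    have "int p * M'' \<ge> 2 * M''" using p2 M''4 by (intro mult_right_mono) auto
    hence "M'' < M'" using M''e y0(1) M''4 by linarith
    moreover have "M' \<le> M"
    proof -
      have "1 * M' \<le> D * M'" by (rule mult_right_mono) (use D1 M'b p2 in auto)
      thus ?thesis using MD x0b by linarith
    qed
    ultimately have lt: "nat M'' < nat M" using M''4 by simp
    have ex: "\<exists>(k::nat) (x::nat \<Rightarrow> int) (y::nat \<Rightarrow> int) (z::int).
           M'' = bval (\<lambda>t. bseq p q (t + 2*(Suc j))) (concat (map (\<lambda>i. [x i, y i]) [1..<k+1]) @ [z])
         \<and> (\<forall>i\<in>{1..k}. 0 \<le> x i \<and> x i < int q ^ (2*(i+Suc j) - 1) - 1)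
         \<and> (\<forall>i\<in>{1..k}. 0 \<le> y i \<and> y i < 2 * int p)
         \<and> (\<forall>i\<in>{1..k}. {y i - 2, y i - 1, y i} \<subseteq> S)
         \<and> 3 \<le> z \<and> z \<le> 6 * int p * int q ^ (2*(k+Suc j) + 1)"
      by (rule less.hyps[where M=M'' and j="Suc j", OF lt]) (use M''4 in linarith)
    then obtain k x y z where IH0:
      "M'' = bval (\<lambda>t. bseq p q (t + 2*(Suc j))) (concat (map (\<lambda>i. [x i, y i]) [1..<k+1]) @ [z])
         \<and> (\<forall>i\<in>{1..k}. 0 \<le> x i \<and> x i < int q ^ (2*(i+Suc j) - 1) - 1)
         \<and> (\<forall>i\<in>{1..k}. 0 \<le> y i \<and> y i < 2 * int p)
         \<and> (\<forall>i\<in>{1..k}. {y i - 2, y i - 1, y i} \<subseteq> S)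
         \<and> 3 \<le> z \<and> z \<le> 6 * int p * int q ^ (2*(k+Suc j) + 1)"
      by (elim exE) (erule that)
    note IH = IH0[THEN conjunct1] IH0[THEN conjunct2, THEN conjunct1]
      IH0[THEN conjunct2, THEN conjunct2, THEN conjunct1]
      IH0[THEN conjunct2, THEN conjunct2, THEN conjunct2, THEN conjunct1]
      IH0[THEN conjunct2, THEN conjunct2, THEN conjunct2, THEN conjunct2, THEN conjunct1]
      IH0[THEN conjunct2, THEN conjunct2, THEN conjunct2, THEN conjunct2, THEN conjunct2]
    define x' where "x' i = (if i = 1 then x0 else x (i - 1))" for i
    define y' where "y' i = (if i = 1 then y0 else y (i - 1))" for i
    have Lk: "concat (map (\<lambda>i. [x' i, y' i]) [1..<Suc k+1])
        = x0 # y0 # concat (map (\<lambda>i. [x i, y i]) [1..<k+1])"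
    proof -
      have e: "[1..<Suc k+1] = 1 # [Suc 1..<Suc k+1]" by (rule upt_conv_Cons) simp
      have m: "map (\<lambda>i. [x' i, y' i]) [Suc 1..<Suc k+1] = map (\<lambda>i. [x i, y i]) [1..<k+1]"
      proof -
        have u: "[Suc 1..<Suc k+1] = map Suc [1..<k+1]" using map_Suc_upt[of 1 "k+1"] by simp
        show ?thesis unfolding u map_map
          by (rule map_cong) (auto simp: x'_def y'_def)
      qed
      show ?thesis unfolding e by (simp only: list.map concat.simps m) (simp add: x'_def y'_def)
    qed
    have bfun: "(\<lambda>t. bseq p q (Suc (Suc t) + 2 * j)) = (\<lambda>t. bseq p q (t + 2 * Suc j))"
      by (rule ext) (simp add: algebra_simps)
    have b1: "bseq p q (1 + 2*j) = D" unfolding D_def Q_def bseq_def by (simp add: algebra_simps)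
    have b2: "bseq p q (2 + 2*j) = int p" unfolding bseq_def by simp
    have val: "M = bval (\<lambda>t. bseq p q (t + 2*j)) (concat (map (\<lambda>i. [x' i, y' i]) [1..<Suc k+1]) @ [z])"
    proof -
      have "bval (\<lambda>t. bseq p q (t + 2*j)) (concat (map (\<lambda>i. [x' i, y' i]) [1..<Suc k+1]) @ [z])
          = x0 + bseq p q (1 + 2*j) * (y0 + bseq p q (Suc 1 + 2*j) *
              bval (\<lambda>t. bseq p q (Suc (Suc t) + 2*j)) (concat (map (\<lambda>i. [x i, y i]) [1..<k+1]) @ [z]))"
        unfolding Lk append_Cons bval_cons by simp
      also have "\<dots> = x0 + D * (y0 + int p * M'')"
        unfolding bfun IH(1) b1 using b2 by simp
      finally show ?thesis using MD M''e by simp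
    qed
    have xb: "\<forall>i\<in>{1..Suc k}. 0 \<le> x' i \<and> x' i < int q ^ (2*(i+j) - 1) - 1"
    proof
      fix i assume i: "i \<in> {1..Suc k}"
      show "0 \<le> x' i \<and> x' i < int q ^ (2*(i+j) - 1) - 1"
      proof (cases "i = 1")
        case True thus ?thesis using x0b unfolding x'_def D_def Q_def by simp
      next
        case False
        hence "i - 1 \<in> {1..k}" "2*(i - 1 + Suc j) - 1 = 2*(i+j) - 1" using i by auto
        hence h: "0 \<le> x (i - 1) \<and> x (i - 1) < int q ^ (2*(i - 1 + Suc j) - 1) - 1" using IH(2) by blast
        have "x' i = x (i - 1)" using False unfolding x'_def by simp
        thus ?thesis using h unfolding \<open>2*(i - 1 + Suc j) - 1 = 2*(i+j) - 1\<close> by simp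
      qed
    qed
    have yb: "\<forall>i\<in>{1..Suc k}. 0 \<le> y' i \<and> y' i < 2 * int p"
    proof
      fix i assume i: "i \<in> {1..Suc k}"
      show "0 \<le> y' i \<and> y' i < 2 * int p"
      proof (cases "i = 1")
        case True thus ?thesis using y0 unfolding y'_def by simp
      next
        case False
        hence "i - 1 \<in> {1..k}" using i by auto
        thus ?thesis using IH(3) False unfolding y'_def by simp
      qed
    qed
    have yS: "\<forall>i\<in>{1..Suc k}. {y' i - 2, y' i - 1, y' i} \<subseteq> S"
    proof
      fix i assume i: "i \<in> {1..Suc k}"
      show "{y' i - 2, y' i - 1, y' i} \<subseteq> S"
      proof (cases "i = 1")
        case True thus ?thesis using y0 unfolding y'_def by simp
      next
        case False
        hence "i - 1 \<in> {1..k}" using i by auto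
        thus ?thesis using IH(4) False unfolding y'_def by simp
      qed
    qed
    have zb: "z \<le> 6 * int p * int q ^ (2*(Suc k+j) + 1)" using IH(6) by simp
    show ?thesis
      by (rule exI[of _ "Suc k"], rule exI[of _ x'], rule exI[of _ y'], rule exI[of _ z])
         (intro conjI; fact val xb yb yS IH(5) zb)
  qed
qed

theorem lemma5p1:
  fixes p q :: nat and A :: "int set" and m :: int
  assumes hp: "prime p"
    and hA: "A \<subseteq> {1 .. int p div 2 - 1}"
    and hAfree: "A \<inter> sumset (sumset A A) {0, 1} = {}"
    and hAAA: "\<exists>c. {c .. c + int p + 1} \<subseteq> sumset (sumset A A) A"
    and hq: "primepow q"
    and hq100: "q > 100 * p"
    and hm: "m \<ge> 3"
  shows "\<exists>(k::nat) (x::nat \<Rightarrow> int) (y::nat \<Rightarrow> int) (z::int).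
           m = bval (bseq p q) (concat (map (\<lambda>i. [x i, y i]) [1..<k+1]) @ [z])
         \<and> (\<forall>i\<in>{1..k}. 0 \<le> x i \<and> x i < int q ^ (2*i - 1) - 1)
         \<and> (\<forall>i\<in>{1..k}. 0 \<le> y i \<and> y i < 2 * int p)
         \<and> (\<forall>i\<in>{1..k}. {y i - 2, y i - 1, y i} \<subseteq> sumset (sumset A A) A)
         \<and> 3 \<le> z \<and> z \<le> 6 * int p * int q ^ (2*k + 1)"
proof -
  let ?S = "sumset (sumset A A) A"
  have p2: "p \<ge> 2" using hp prime_ge_2_nat by blast
  have q2: "q \<ge> 2" using hq100 p2 by simp
  obtain c where c: "{c .. c + int p + 1} \<subseteq> ?S" using hAAA by blast
  have Sb: "3 \<le> s \<and> s \<le> 3 * (int p div 2 - 1)" if s: "s \<in> ?S" for s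
  proof -
    obtain a1 a2 a3 where "s = a1 + a2 + a3" "a1 \<in> A" "a2 \<in> A" "a3 \<in> A"
      using s unfolding sumset_def by blast
    moreover have "1 \<le> a1 \<and> a1 \<le> int p div 2 - 1" "1 \<le> a2 \<and> a2 \<le> int p div 2 - 1" "1 \<le> a3 \<and> a3 \<le> int p div 2 - 1"
      using subsetD[OF hA calculation(2)] subsetD[OF hA calculation(3)] subsetD[OF hA calculation(4)] by auto
    ultimately show ?thesis by auto
  qed
  have cin: "c \<in> ?S" "c + int p + 1 \<in> ?S" using c by (auto simp: subset_iff)
  have c0: "c \<ge> 3" using Sb[OF cin(1)] by linarith
  have ctop: "c + int p + 1 \<le> 3 * (int p div 2 - 1)" using Sb[OF cin(2)] by linarith
  have Y: "\<exists>y. 0 \<le> y \<and> y < 2 * int p \<and> {y - 2, y - 1, y} \<subseteq> ?S \<and> y mod int p = r mod int p" for r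
  proof -
    define y where "y = c + 2 + (r - c - 2) mod int p"
    have r1: "0 \<le> (r - c - 2) mod int p" "(r - c - 2) mod int p < int p" using p2 by auto
    have ym: "y mod int p = r mod int p" unfolding y_def by (simp add: mod_simps)
    have ys: "{y - 2, y - 1, y} \<subseteq> {c .. c + int p + 1}" using r1 unfolding y_def by auto
    have ys2: "{y - 2, y - 1, y} \<subseteq> ?S" using ys c by (rule order_trans)
    have hd: "2 * (int p div 2) \<le> int p" by simp
    have yl: "y \<le> c + int p + 1" using r1 unfolding y_def by linarith
    have y0: "0 \<le> y" using r1 c0 unfolding y_def by linarith
    have y2: "y < 2 * int p"
    proof -
      obtain d where d: "d = int p div 2" by blast
      have "y \<le> 3 * d - 3" using yl ctop[folded d] by (simp add: right_diff_distrib)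
      moreover have "2 * d \<le> int p" using hd[folded d] .
      moreover have "int p \<ge> 2" using p2 by simp
      ultimately show ?thesis by linarith
    qed
    show ?thesis by (intro exI[of _ y] conjI) (fact y0 y2 ys2 ym)+
  qed
  have "\<exists>(k::nat) (x::nat \<Rightarrow> int) (y::nat \<Rightarrow> int) (z::int).
           m = bval (\<lambda>t. bseq p q (t + 2*0)) (concat (map (\<lambda>i. [x i, y i]) [1..<k+1]) @ [z])
         \<and> (\<forall>i\<in>{1..k}. 0 \<le> x i \<and> x i < int q ^ (2*(i+0) - 1) - 1)
         \<and> (\<forall>i\<in>{1..k}. 0 \<le> y i \<and> y i < 2 * int p)
         \<and> (\<forall>i\<in>{1..k}. {y i - 2, y i - 1, y i} \<subseteq> ?S)
         \<and> 3 \<le> z \<and> z \<le> 6 * int p * int q ^ (2*(k+0) + 1)"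
    by (rule main[OF Y p2 q2 hm])
  thus ?thesis by simp
qed

end
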